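(* Let $A\in\mathcal S_{0,1}$. Then $LJ=J$ and $L(i_VF)=\frac12 i_VF$ for every $V\in\mathbb R^n$.
   Context: $G\subset SO(r)$ compact with Lie algebra $\mathfrak g$; $E$ the trivial $G$-vector bundle over $\mathbb R^n$. Connection $A=A_idx^i$, curvature $F_{ij}=\partial_iA_j-\partial_jA_i+[A_i,A_j]$; repeated indices summed; $\nabla_pT=\partial_pT+[A_p,T]$. $J=\nabla_pF_{pj}dx^j$, $i_VF=V^pF_{pj}dx^j$. $\mathcal S_{0,1}$: connections with $\nabla_pF_{pj}-\frac12x^pF_{pj}=0$ for all $j$ and $\sup|\nabla^kA|<\infty$ for all $k\ge1$. For a $\mathfrak g$-valued 1-form $\theta$: $((d^\nabla)^*d^\nabla\theta)_j=-\nabla_p(\nabla_p\theta_j-\nabla_j\theta_p)$, $\mathcal R(\theta)_j=[F_{pj},\theta_p]$, $(i_{x/2}d^\nabla\theta)_j=\frac12x^k(\nabla_k\theta_j-\nabla_j\theta_k)$, and $L\theta=-[(d^\nabla)^*d^\nabla\theta+\mathcal R(\theta)+i_{x/2}d^\nabla\theta]$. *)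

theory Defs
  imports "HOL-Analysis.Analysis"
begin

type_synonym ('r) mat = "real^'r^'r"

fun matpow :: "real^'r^'r \<Rightarrow> nat \<Rightarrow> real^'r^'r" where
  "matpow X 0 = mat 1"
| "matpow X (Suc k) = X ** matpow X k"

definition mexp :: "real^'r^'r \<Rightarrow> real^'r^'r" where
  "mexp X = (\<Sum>k. (1 / fact k) *\<^sub>R matpow X k)"

definition SO :: "(real^'r^'r) set" where
  "SO = {M. transpose M ** M = mat 1 \<and> det M = 1}"

text \<open>A compact subgroup of SO(r): a closed subgroup (closed subsets of the compact SO(r)
  are compact, and closed subgroups are Lie groups).\<close>
definition compact_subgroup_SO :: "(real^'r^'r) set \<Rightarrow> bool" where
  "compact_subgroup_SO G \<longleftrightarrow> G \<subseteq> SO \<and> mat 1 \<in> G \<and>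
     (\<forall>M\<in>G. \<forall>N\<in>G. M ** N \<in> G) \<and> (\<forall>M\<in>G. matrix_inv M \<in> G) \<and> compact G"

definition lie_algebra :: "(real^'r^'r) set \<Rightarrow> (real^'r^'r) set" where
  "lie_algebra G = {X. \<forall>t::real. mexp (t *\<^sub>R X) \<in> G}"

definition br :: "real^'r^'r \<Rightarrow> real^'r^'r \<Rightarrow> real^'r^'r" where
  "br X Y = X ** Y - Y ** X"

definition pd :: "'n::finite \<Rightarrow> (real^'n \<Rightarrow> 'b::real_normed_vector) \<Rightarrow> real^'n \<Rightarrow> 'b" where
  "pd i f x = frechet_derivative f (at x) (axis i 1)"

fun iterpd :: "'n::finite list \<Rightarrow> (real^'n \<Rightarrow> 'b::real_normed_vector) \<Rightarrow> real^'n \<Rightarrow> 'b" where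
  "iterpd [] f = f"
| "iterpd (i # is) f = pd i (iterpd is f)"

definition smooth_fun :: "(real^'n::finite \<Rightarrow> 'b::real_normed_vector) \<Rightarrow> bool" where
  "smooth_fun f \<longleftrightarrow> (\<forall>is x. iterpd is f differentiable (at x))"

text \<open>A connection A = A_i dx^i on the trivial bundle over R^n: A i x \<in> g.\<close>

definition curv :: "('n::finite \<Rightarrow> real^'n \<Rightarrow> real^'r^'r) \<Rightarrow> 'n \<Rightarrow> 'n \<Rightarrow> real^'n \<Rightarrow> real^'r^'r" where
  "curv A i j x = pd i (A j) x - pd j (A i) x + br (A i x) (A j x)"

definition cov :: "('n::finite \<Rightarrow> real^'n \<Rightarrow> real^'r^'r) \<Rightarrow> 'n \<Rightarrow> (real^'n \<Rightarrow> real^'r^'r) \<Rightarrow> real^'n \<Rightarrow> real^'r^'r" where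
  "cov A p T x = pd p T x + br (A p x) (T x)"

definition Jform :: "('n::finite \<Rightarrow> real^'n \<Rightarrow> real^'r^'r) \<Rightarrow> 'n \<Rightarrow> real^'n \<Rightarrow> real^'r^'r" where
  "Jform A j x = (\<Sum>p\<in>UNIV. cov A p (curv A p j) x)"

definition iF :: "('n::finite \<Rightarrow> real^'n \<Rightarrow> real^'r^'r) \<Rightarrow> real^'n \<Rightarrow> 'n \<Rightarrow> real^'n \<Rightarrow> real^'r^'r" where
  "iF A V j x = (\<Sum>p\<in>UNIV. (V $ p) *\<^sub>R curv A p j x)"

definition S01 :: "(real^'r^'r) set \<Rightarrow> ('n::finite \<Rightarrow> real^'n \<Rightarrow> real^'r^'r) \<Rightarrow> bool" where
  "S01 g A \<longleftrightarrow>
     (\<forall>i x. A i x \<in> g) \<and> (\<forall>i. smooth_fun (A i)) \<and>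
     (\<forall>j x. Jform A j x - (1/2) *\<^sub>R (\<Sum>p\<in>UNIV. (x $ p) *\<^sub>R curv A p j x) = 0) \<and>
     (\<forall>is i. is \<noteq> [] \<longrightarrow> bounded (range (iterpd is (A i))))"

definition dstard :: "('n::finite \<Rightarrow> real^'n \<Rightarrow> real^'r^'r) \<Rightarrow> ('n \<Rightarrow> real^'n \<Rightarrow> real^'r^'r) \<Rightarrow> 'n \<Rightarrow> real^'n \<Rightarrow> real^'r^'r" where
  "dstard A \<theta> j x = - (\<Sum>p\<in>UNIV. cov A p (\<lambda>y. cov A p (\<theta> j) y - cov A j (\<theta> p) y) x)"

definition Rop :: "('n::finite \<Rightarrow> real^'n \<Rightarrow> real^'r^'r) \<Rightarrow> ('n \<Rightarrow> real^'n \<Rightarrow> real^'r^'r) \<Rightarrow> 'n \<Rightarrow> real^'n \<Rightarrow> real^'r^'r" where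
  "Rop A \<theta> j x = (\<Sum>p\<in>UNIV. br (curv A p j x) (\<theta> p x))"

definition ixd :: "('n::finite \<Rightarrow> real^'n \<Rightarrow> real^'r^'r) \<Rightarrow> ('n \<Rightarrow> real^'n \<Rightarrow> real^'r^'r) \<Rightarrow> 'n \<Rightarrow> real^'n \<Rightarrow> real^'r^'r" where
  "ixd A \<theta> j x = (1/2) *\<^sub>R (\<Sum>k\<in>UNIV. (x $ k) *\<^sub>R (cov A k (\<theta> j) x - cov A j (\<theta> k) x))"

definition Lop :: "('n::finite \<Rightarrow> real^'n \<Rightarrow> real^'r^'r) \<Rightarrow> ('n \<Rightarrow> real^'n \<Rightarrow> real^'r^'r) \<Rightarrow> 'n \<Rightarrow> real^'n \<Rightarrow> real^'r^'r" where
  "Lop A \<theta> j x = - (dstard A \<theta> j x + Rop A \<theta> j x + ixd A \<theta> j x)"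

end

theory Submission
  imports Defs
begin


lemma pd_has: "(f has_derivative D) (at x) \<Longrightarrow> pd i f x = D (axis i 1)"
  unfolding pd_def using frechet_derivative_at by metis

lemma pd_bilin:
  fixes f :: "real^'n::finite \<Rightarrow> 'a::real_normed_vector" and g :: "real^'n \<Rightarrow> 'b::real_normed_vector"
    and prod :: "'a \<Rightarrow> 'b \<Rightarrow> 'c::real_normed_vector"
  assumes bb: "bounded_bilinear prod" and f: "f differentiable (at x)" and g: "g differentiable (at x)"
  shows "pd i (\<lambda>y. prod (f y) (g y)) x = prod (pd i f x) (g x) + prod (f x) (pd i g x)"
proof -
  have f': "(f has_derivative frechet_derivative f (at x)) (at x)" using f frechet_derivative_works by blast
  have g': "(g has_derivative frechet_derivative g (at x)) (at x)" using g frechet_derivative_works by blast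
  show ?thesis using pd_has[OF bounded_bilinear.FDERIV[OF bb f' g']] by (simp add: pd_def add.commute)
qed

lemma pd_add:
  assumes f: "f differentiable (at x)" and g: "g differentiable (at x)"
  shows "pd i (\<lambda>y. f y + g y) x = pd i f x + pd i g x"
proof -
  have f': "(f has_derivative frechet_derivative f (at x)) (at x)" using f frechet_derivative_works by blast
  have g': "(g has_derivative frechet_derivative g (at x)) (at x)" using g frechet_derivative_works by blast
  show ?thesis using pd_has[OF has_derivative_add[OF f' g']] by (simp add: pd_def)
qed

lemma pd_diff:
  assumes f: "f differentiable (at x)" and g: "g differentiable (at x)"
  shows "pd i (\<lambda>y. f y - g y) x = pd i f x - pd i g x"
proof -
  have f': "(f has_derivative frechet_derivative f (at x)) (at x)" using f frechet_derivative_works by blast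
  have g': "(g has_derivative frechet_derivative g (at x)) (at x)" using g frechet_derivative_works by blast
  show ?thesis using pd_has[OF has_derivative_diff[OF f' g']] by (simp add: pd_def)
qed

lemma pd_minus:
  assumes f: "f differentiable (at x)"
  shows "pd i (\<lambda>y. - f y) x = - pd i f x"
proof -
  have f': "(f has_derivative frechet_derivative f (at x)) (at x)" using f frechet_derivative_works by blast
  show ?thesis using pd_has[OF has_derivative_minus[OF f']] by (simp add: pd_def)
qed

lemma pd_sum:
  assumes f: "\<And>p. p \<in> S \<Longrightarrow> f p differentiable (at x)"
  shows "pd i (\<lambda>y. \<Sum>p\<in>S. f p y) x = (\<Sum>p\<in>S. pd i (f p) x)"
proof -
  have f': "\<And>p. p \<in> S \<Longrightarrow> (f p has_derivative frechet_derivative (f p) (at x)) (at x)" using f frechet_derivative_works by blast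
  show ?thesis using pd_has[OF has_derivative_sum[OF f']] by (simp add: pd_def)
qed

lemma pd_linear:
  fixes f :: "real^'n::finite \<Rightarrow> 'a::real_normed_vector" and L :: "'a \<Rightarrow> 'c::real_normed_vector"
  assumes L: "bounded_linear L" and f: "f differentiable (at x)"
  shows "pd i (\<lambda>y. L (f y)) x = L (pd i f x)"
proof -
  have f': "(f has_derivative frechet_derivative f (at x)) (at x)" using f frechet_derivative_works by blast
  show ?thesis using pd_has[OF bounded_linear.has_derivative[OF L f']] by (simp add: pd_def)
qed

lemma pd_const: "pd i (\<lambda>y. c) x = 0"
  by (simp add: pd_def)

lemma pd_coord: "pd i (\<lambda>y::real^'n. y $ k) x = (if i = k then 1 else 0)"
proof -
  have "((\<lambda>y::real^'n. y $ k) has_derivative (\<lambda>y. y $ k)) (at x)"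
    using bounded_linear_vec_nth bounded_linear_imp_has_derivative by blast
  then show ?thesis using pd_has by (fastforce simp: axis_def)
qed

lemma matrix_add_rdistrib: "((A::real^'m^'k) + B) ** (C::real^'n^'m) = A ** C + B ** C"
  by (vector matrix_matrix_mult_def sum.distrib[symmetric] field_simps)

lemma matrix_diff_rdistrib: "((A::real^'m^'k) - B) ** (C::real^'n^'m) = A ** C - B ** C"
  by (vector matrix_matrix_mult_def sum_subtractf[symmetric] field_simps)

lemma matrix_diff_ldistrib: "(C::real^'m^'k) ** ((A::real^'n^'m) - B) = C ** A - C ** B"
  by (vector matrix_matrix_mult_def sum_subtractf[symmetric] field_simps)

lemma bb_mm: "bounded_bilinear (\<lambda>X Y::real^'r^'r. X ** Y)"
  unfolding bilinear_conv_bounded_bilinear[symmetric] bilinear_def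
  by (auto intro!: linearI simp: matrix_add_ldistrib matrix_add_rdistrib scalar_matrix_assoc matrix_scalar_ac)


lemma bb_br: "bounded_bilinear (br :: real^'r^'r \<Rightarrow> _)"
  unfolding bilinear_conv_bounded_bilinear[symmetric] bilinear_def br_def
  by (auto intro!: linearI simp: matrix_add_ldistrib matrix_add_rdistrib scalar_matrix_assoc matrix_scalar_ac
     scaleR_diff_right)

lemma jacobi: "br X (br Y Z) = br (br X Y) Z + br Y (br X (Z::real^'r^'r))"
  by (simp add: br_def matrix_diff_ldistrib matrix_diff_rdistrib matrix_mul_assoc algebra_simps)

lemma br_anti: "br X Y = - br Y (X::real^'r^'r)"
  by (simp add: br_def)



lemma differentiable_bilin:
  fixes f :: "'n::real_normed_vector \<Rightarrow> 'a::real_normed_vector" and g :: "'n \<Rightarrow> 'b::real_normed_vector"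
    and prod :: "'a \<Rightarrow> 'b \<Rightarrow> 'c::real_normed_vector"
  assumes bb: "bounded_bilinear prod" and f: "f differentiable (at x)" and g: "g differentiable (at x)"
  shows "(\<lambda>y. prod (f y) (g y)) differentiable (at x)"
  using f g bounded_bilinear.FDERIV[OF bb] unfolding differentiable_def by blast

lemma differentiable_lin:
  "bounded_linear L \<Longrightarrow> f differentiable (at x) \<Longrightarrow> (\<lambda>y. L (f y)) differentiable (at x)"
  unfolding differentiable_def using bounded_linear.has_derivative by blast

lemma iterpd_append: "iterpd (is @ js) f = iterpd is (iterpd js f)"
  by (induction "is") auto

definition smo :: "nat \<Rightarrow> (real^'n::finite \<Rightarrow> 'b::real_normed_vector) \<Rightarrow> bool" where
  "smo n f = (\<forall>is. length is \<le> n \<longrightarrow> (\<forall>x. iterpd is f differentiable (at x)))"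

lemma smo_0: "smo 0 f \<longleftrightarrow> (\<forall>x. f differentiable (at x))"
  by (simp add: smo_def)

lemma smo_Suc:
  fixes f :: "real^'n::finite \<Rightarrow> 'b::real_normed_vector"
  shows "smo (Suc n) f \<longleftrightarrow> (\<forall>x. f differentiable (at x)) \<and> (\<forall>i. smo n (pd i f))"
proof
  assume h: "smo (Suc n) f"
  show "(\<forall>x. f differentiable (at x)) \<and> (\<forall>i. smo n (pd i f))"
  proof (intro conjI allI)
    show "f differentiable (at x)" for x using h[unfolded smo_def, rule_format, of "[]"] by simp
    show "smo n (pd i f)" for i :: 'n
      unfolding smo_def
    proof (intro allI impI)
      fix "is" :: "'n list" and x assume "length is \<le> n"
      then show "iterpd is (pd i f) differentiable (at x)"
        using h[unfolded smo_def, rule_format, of "is @ [i]"] by (simp add: iterpd_append)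
    qed
  qed
next
  assume h: "(\<forall>x. f differentiable (at x)) \<and> (\<forall>i. smo n (pd i f))"
  show "smo (Suc n) f"
    unfolding smo_def
  proof (intro allI impI)
    fix "is" :: "'n list" and x assume l: "length is \<le> Suc n"
    show "iterpd is f differentiable (at x)"
    proof (cases "is" rule: rev_cases)
      case Nil then show ?thesis using h by simp
    next
      case (snoc js i)
      then show ?thesis using h l by (simp add: iterpd_append smo_def)
    qed
  qed
qed

lemma smooth_smo: "smooth_fun f \<longleftrightarrow> (\<forall>n. smo n f)"
  unfolding smooth_fun_def smo_def by auto

lemma smo_mono: "smo (Suc n) f \<Longrightarrow> smo n f"
  unfolding smo_def by auto

lemma smo_add:
  fixes f g :: "real^'n::finite \<Rightarrow> 'a::real_normed_vector"
  shows "smo n f \<Longrightarrow> smo n g \<Longrightarrow> smo n (\<lambda>y. f y + g y)"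
proof (induction n arbitrary: f g)
  case 0 then show ?case by (simp add: smo_0)
next
  case (Suc n)
  have df: "\<And>x. f differentiable (at x)" and dg: "\<And>x. g differentiable (at x)"
    using Suc.prems by (auto simp: smo_Suc)
  have e: "pd i (\<lambda>y. f y + g y) = (\<lambda>x. pd i f x + pd i g x)" for i
    by (rule ext, rule pd_add[OF df dg])
  show ?case unfolding smo_Suc using df dg e Suc by (auto simp: smo_Suc)
qed

lemma smo_linear:
  fixes f :: "real^'n::finite \<Rightarrow> 'a::real_normed_vector" and L :: "'a \<Rightarrow> 'c::real_normed_vector"
  assumes L: "bounded_linear L"
  shows "smo n f \<Longrightarrow> smo n (\<lambda>y. L (f y))"
proof (induction n arbitrary: f)
  case 0 then show ?case
    unfolding smo_0 using differentiable_lin[OF L] by blast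
next
  case (Suc n)
  have df: "\<And>x. f differentiable (at x)"
    using Suc.prems by (auto simp: smo_Suc)
  have e: "pd i (\<lambda>y. L (f y)) = (\<lambda>x. L (pd i f x))" for i
    by (rule ext, rule pd_linear[OF L df])
  have "(\<lambda>y. L (f y)) differentiable (at x)" for x
    using differentiable_lin[OF L df] by simp
  then show ?case unfolding smo_Suc using e Suc by (auto simp: smo_Suc)
qed

lemma pd_const_fun: "pd i (\<lambda>y. c) = (\<lambda>y. 0)"
  by (simp add: pd_def fun_eq_iff)

lemma smo_const: "smo n (\<lambda>y::real^'n::finite. c)"
  by (induction n arbitrary: c) (auto simp: smo_0 smo_Suc pd_const_fun)

lemma smo_bilin:
  fixes f :: "real^'n::finite \<Rightarrow> 'a::real_normed_vector" and g :: "real^'n \<Rightarrow> 'b::real_normed_vector"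
    and prod :: "'a \<Rightarrow> 'b \<Rightarrow> 'c::real_normed_vector"
  assumes bb: "bounded_bilinear prod"
  shows "smo n f \<Longrightarrow> smo n g \<Longrightarrow> smo n (\<lambda>y. prod (f y) (g y))"
proof (induction n arbitrary: f g)
  case 0 then show ?case by (simp add: smo_0 differentiable_bilin[OF bb])
next
  case (Suc n)
  have df: "\<And>x. f differentiable (at x)" and dg: "\<And>x. g differentiable (at x)"
    using Suc.prems by (auto simp: smo_Suc)
  show ?case unfolding smo_Suc
  proof (intro conjI allI)
    show "(\<lambda>y. prod (f y) (g y)) differentiable (at x)" for x by (rule differentiable_bilin[OF bb df dg])
    fix i
    have e: "pd i (\<lambda>y. prod (f y) (g y)) = (\<lambda>x. prod (pd i f x) (g x) + prod (f x) (pd i g x))"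
      by (rule ext, rule pd_bilin[OF bb df dg])
    have p1: "smo n (pd i f)" using Suc.prems(1) by (simp add: smo_Suc)
    have p2: "smo n (pd i g)" using Suc.prems(2) by (simp add: smo_Suc)
    have a: "smo n (\<lambda>x. prod (pd i f x) (g x))" by (rule Suc.IH[OF p1 smo_mono[OF Suc.prems(2)]])
    have b: "smo n (\<lambda>x. prod (f x) (pd i g x))" by (rule Suc.IH[OF smo_mono[OF Suc.prems(1)] p2])
    have "smo n (\<lambda>x. prod (pd i f x) (g x) + prod (f x) (pd i g x))"
      using a b by (rule smo_add)
    then show "smo n (pd i (\<lambda>y. prod (f y) (g y)))" using e by simp
  qed
qed



lemma smooth_diffble: "smooth_fun f \<Longrightarrow> f differentiable (at x)"
  unfolding smooth_fun_def using iterpd.simps(1) by metis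

lemma smooth_pd: "smooth_fun f \<Longrightarrow> smooth_fun (pd i f)"
  unfolding smooth_fun_def using iterpd_append[of _ "[i]" f] by (metis iterpd.simps)

lemma smooth_add: "smooth_fun f \<Longrightarrow> smooth_fun g \<Longrightarrow> smooth_fun (\<lambda>y. f y + g y)"
  by (simp add: smooth_smo smo_add)

lemma smooth_lin:
  fixes f :: "real^'n::finite \<Rightarrow> 'a::real_normed_vector" and L :: "'a \<Rightarrow> 'c::real_normed_vector"
  shows "bounded_linear L \<Longrightarrow> smooth_fun f \<Longrightarrow> smooth_fun (\<lambda>y. L (f y))"
  by (simp add: smooth_smo smo_linear)

lemma smooth_bilin:
  fixes f :: "real^'n::finite \<Rightarrow> 'a::real_normed_vector" and g :: "real^'n \<Rightarrow> 'b::real_normed_vector"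
    and prod :: "'a \<Rightarrow> 'b \<Rightarrow> 'c::real_normed_vector"
  shows "bounded_bilinear prod \<Longrightarrow> smooth_fun f \<Longrightarrow> smooth_fun g \<Longrightarrow> smooth_fun (\<lambda>y. prod (f y) (g y))"
  by (simp add: smooth_smo smo_bilin)

lemma smooth_const: "smooth_fun (\<lambda>y. c)"
  by (simp add: smooth_smo smo_const)

lemma smooth_uminus: "smooth_fun f \<Longrightarrow> smooth_fun (\<lambda>y. - f y)"
  using smooth_lin[OF bounded_linear_minus[OF bounded_linear_ident]] by blast

lemma smooth_diff: "smooth_fun f \<Longrightarrow> smooth_fun g \<Longrightarrow> smooth_fun (\<lambda>y. f y - g y)"
  using smooth_add[OF _ smooth_uminus[of g]] by simp

lemma smooth_scaleR: "smooth_fun c \<Longrightarrow> smooth_fun f \<Longrightarrow> smooth_fun (\<lambda>y. c y *\<^sub>R f y)"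
  using smooth_bilin[OF bounded_bilinear_scaleR] by blast

lemma smooth_br: "smooth_fun f \<Longrightarrow> smooth_fun g \<Longrightarrow> smooth_fun (\<lambda>y. br (f y) (g y))"
  using smooth_bilin[OF bb_br] by blast

lemma smooth_sum: "finite S \<Longrightarrow> (\<And>p. p \<in> S \<Longrightarrow> smooth_fun (f p)) \<Longrightarrow> smooth_fun (\<lambda>y. \<Sum>p\<in>S. f p y)"
proof (induction S rule: finite_induct)
  case empty then show ?case using smooth_const[of 0] by simp
next
  case (insert a F) then show ?case using smooth_add[of "f a" "\<lambda>y. \<Sum>p\<in>F. f p y"] by simp
qed

lemma pd_ident_fun: "pd i (\<lambda>y. y) = (\<lambda>x. axis i 1)"
  by (simp add: pd_def fun_eq_iff)

lemma smo_ident: "smo n (\<lambda>y::real^'n::finite. y)"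
  by (induction n) (auto simp: smo_0 smo_Suc pd_ident_fun smo_const)

lemma smooth_coord: "smooth_fun (\<lambda>y::real^'n::finite. y $ k)"
  using smooth_lin[OF bounded_linear_vec_nth, of "\<lambda>y. y"] smo_ident smooth_smo by blast



lemma line_deriv:
  fixes f :: "real^'n::finite \<Rightarrow> real"
  assumes "f differentiable (at (y + s *\<^sub>R axis i 1))"
  shows "((\<lambda>s. f (y + s *\<^sub>R axis i 1)) has_real_derivative pd i f (y + s *\<^sub>R axis i 1)) (at s)"
proof -
  let ?D = "frechet_derivative f (at (y + s *\<^sub>R axis i 1))"
  have f': "(f has_derivative ?D) (at (y + s *\<^sub>R axis i 1))"
    using assms frechet_derivative_works by blast
  have l: "((\<lambda>s. y + s *\<^sub>R axis i (1::real)) has_derivative (\<lambda>s. s *\<^sub>R axis i 1)) (at s)"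
    by (auto intro!: derivative_eq_intros)
  have "((\<lambda>s. f (y + s *\<^sub>R axis i 1)) has_derivative (\<lambda>h. ?D (h *\<^sub>R axis i 1))) (at s)"
    using has_derivative_compose[OF l f'] by (simp add: o_def)
  moreover have "(\<lambda>h. ?D (h *\<^sub>R axis i 1)) = (\<lambda>h. ?D (axis i 1) * h)"
    using linear_scale[OF has_derivative_linear[OF f']] by auto
  ultimately show ?thesis
    by (simp add: has_field_derivative_def pd_def)
qed

lemma mvt_deriv:
  fixes g :: "real \<Rightarrow> real"
  assumes "a < b" and "\<And>s. (g has_real_derivative g' s) (at s)"
  shows "\<exists>z. a < z \<and> z < b \<and> g b - g a = (b - a) * g' z"
proof -
  have "\<exists>x\<in>{a<..<b}. g b - g a = (\<lambda>d. g' x * d) (b - a)"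
    by (rule mvt_simple[OF assms(1)]) (metis assms(2) has_derivative_at_withinI has_field_derivative_def)
  then show ?thesis by (auto simp: mult.commute)
qed

lemma mixed_step:
  fixes f :: "real^'n::finite \<Rightarrow> real"
  assumes d0: "\<And>x. f differentiable (at x)" and d1: "\<And>x. pd i f differentiable (at x)"
    and hp: "0 < h"
  shows "\<exists>s t. 0 < s \<and> s < h \<and> 0 < t \<and> t < h \<and>
     f (x + h *\<^sub>R axis i 1 + h *\<^sub>R axis j 1) - f (x + h *\<^sub>R axis i 1) - f (x + h *\<^sub>R axis j 1) + f x
       = h * h * pd j (pd i f) (x + s *\<^sub>R axis i 1 + t *\<^sub>R axis j 1)"
proof -
  define u where "u = axis i (1::real)"
  define v where "v = axis j (1::real)"
  define \<phi> where "\<phi> s = f (x + h *\<^sub>R v + s *\<^sub>R u) - f (x + s *\<^sub>R u)" for s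
  have "(\<phi> has_real_derivative (pd i f (x + h *\<^sub>R v + s *\<^sub>R u) - pd i f (x + s *\<^sub>R u))) (at s)" for s
    unfolding \<phi>_def u_def
    by (intro DERIV_diff line_deriv d0)
  from mvt_deriv[OF hp this] obtain s where s: "0 < s" "s < h"
    and es: "\<phi> h - \<phi> 0 = (h - 0) * (pd i f (x + h *\<^sub>R v + s *\<^sub>R u) - pd i f (x + s *\<^sub>R u))"
    by blast
  define \<psi> where "\<psi> t = pd i f (x + s *\<^sub>R u + t *\<^sub>R v)" for t
  have "(\<psi> has_real_derivative pd j (pd i f) (x + s *\<^sub>R u + t *\<^sub>R v)) (at t)" for t
    unfolding \<psi>_def v_def by (intro line_deriv d1)
  from mvt_deriv[OF hp this] obtain t where t: "0 < t" "t < h"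
    and et: "\<psi> h - \<psi> 0 = (h - 0) * pd j (pd i f) (x + s *\<^sub>R u + t *\<^sub>R v)"
    by blast
  have "f (x + h *\<^sub>R u + h *\<^sub>R v) - f (x + h *\<^sub>R u) - f (x + h *\<^sub>R v) + f x = \<phi> h - \<phi> 0"
    unfolding \<phi>_def by (simp add: algebra_simps)
  also have "\<dots> = h * (\<psi> h - \<psi> 0)"
    using es unfolding \<psi>_def by (simp add: algebra_simps)
  also have "\<dots> = h * h * pd j (pd i f) (x + s *\<^sub>R u + t *\<^sub>R v)"
    using et by simp
  finally show ?thesis using s t unfolding u_def v_def by blast
qed
lemma near:
  assumes "0 < s" "s < h" "0 < t" "t < h"
  shows "dist (x + s *\<^sub>R axis i (1::real) + t *\<^sub>R axis j 1) x < 2 * h"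
proof -
  have "dist (x + s *\<^sub>R axis i (1::real) + t *\<^sub>R axis j 1) x = norm (s *\<^sub>R axis i (1::real) + t *\<^sub>R axis j 1)"
    by (simp add: dist_norm)
  also have "\<dots> \<le> norm (s *\<^sub>R axis i (1::real)) + norm (t *\<^sub>R axis j (1::real))" by (rule norm_triangle_ineq)
  also have "\<dots> = s + t" using assms by simp
  finally show ?thesis using assms by simp
qed

lemma schwarz_real:
  fixes f :: "real^'n::finite \<Rightarrow> real"
  assumes d0: "\<And>x. f differentiable (at x)" and di: "\<And>x. pd i f differentiable (at x)"
    and dj: "\<And>x. pd j f differentiable (at x)"
    and c1: "isCont (pd j (pd i f)) x" and c2: "isCont (pd i (pd j f)) x"
  shows "pd j (pd i f) x = pd i (pd j f) x"
proof (rule ccontr)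
  let ?a = "pd j (pd i f) x" and ?b = "pd i (pd j f) x"
  assume ne: "?a \<noteq> ?b"
  define e where "e = \<bar>?a - ?b\<bar> / 2"
  have e: "e > 0" using ne by (simp add: e_def)
  obtain d1 where d1: "d1 > 0" "\<And>y. dist y x < d1 \<Longrightarrow> dist (pd j (pd i f) y) ?a < e"
    using c1 e unfolding continuous_at_eps_delta by blast
  obtain d2 where d2: "d2 > 0" "\<And>y. dist y x < d2 \<Longrightarrow> dist (pd i (pd j f) y) ?b < e"
    using c2 e unfolding continuous_at_eps_delta by blast
  define h where "h = min d1 d2 / 4"
  have hp: "h > 0" using d1 d2 by (simp add: h_def)
  obtain s t where st: "0 < s" "s < h" "0 < t" "t < h" and
    E1: "f (x + h *\<^sub>R axis i 1 + h *\<^sub>R axis j 1) - f (x + h *\<^sub>R axis i 1) - f (x + h *\<^sub>R axis j 1) + f x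
       = h * h * pd j (pd i f) (x + s *\<^sub>R axis i 1 + t *\<^sub>R axis j 1)"
    using mixed_step[OF d0 di hp] by blast
  obtain s' t' where st': "0 < s'" "s' < h" "0 < t'" "t' < h" and
    E2: "f (x + h *\<^sub>R axis j 1 + h *\<^sub>R axis i 1) - f (x + h *\<^sub>R axis j 1) - f (x + h *\<^sub>R axis i 1) + f x
       = h * h * pd i (pd j f) (x + s' *\<^sub>R axis j 1 + t' *\<^sub>R axis i 1)"
    using mixed_step[OF d0 dj hp] by blast
  have "x + h *\<^sub>R axis j 1 + h *\<^sub>R axis i 1 = x + h *\<^sub>R axis i 1 + h *\<^sub>R axis j (1::real)"
    by (simp add: algebra_simps)
  then have eq: "pd j (pd i f) (x + s *\<^sub>R axis i 1 + t *\<^sub>R axis j 1) = pd i (pd j f) (x + s' *\<^sub>R axis j 1 + t' *\<^sub>R axis i 1)"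
    using E1 E2 hp by (simp add: algebra_simps)
  have 1: "dist (pd j (pd i f) (x + s *\<^sub>R axis i 1 + t *\<^sub>R axis j 1)) ?a < e"
  proof (rule d1(2))
    show "dist (x + s *\<^sub>R axis i 1 + t *\<^sub>R axis j 1) x < d1"
      using near[OF st, of x i j] d1(1) d2(1) unfolding h_def by (simp add: min_def split: if_splits)
  qed
  have 2: "dist (pd i (pd j f) (x + s' *\<^sub>R axis j 1 + t' *\<^sub>R axis i 1)) ?b < e"
  proof (rule d2(2))
    show "dist (x + s' *\<^sub>R axis j 1 + t' *\<^sub>R axis i 1) x < d2"
      using near[OF st', of x j i] d1(1) d2(1) unfolding h_def by (simp add: min_def split: if_splits)
  qed
  from 1 2 eq have "\<bar>?a - ?b\<bar> < 2 * e" by (simp add: dist_real_def)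
  then show False by (simp add: e_def)
qed



lemma schwarz:
  fixes f :: "real^'n::finite \<Rightarrow> real^'r^'r"
  assumes sf: "smooth_fun f"
  shows "pd j (pd i f) x = pd i (pd j f) x"
proof -
  have "pd j (pd i f) x $ a $ b = pd i (pd j f) x $ a $ b" for a b
  proof -
    let ?L = "\<lambda>M::real^'r^'r. M $ a $ b"
    have L: "bounded_linear ?L"
      by (rule bounded_linear_compose[OF bounded_linear_vec_nth[of b] bounded_linear_vec_nth[of a]])
    define g where "g y = ?L (f y)" for y
    have sf1: "smooth_fun (pd k f)" for k using smooth_pd[OF sf] .
    have sf2: "smooth_fun (pd k (pd l f))" for k l using smooth_pd[OF sf1] .
    have pg: "pd k g = (\<lambda>y. ?L (pd k f y))" for k
      unfolding g_def by (rule ext, rule pd_linear[OF L smooth_diffble[OF sf]])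
    have pg2: "pd l (pd k g) = (\<lambda>y. ?L (pd l (pd k f) y))" for k l
      unfolding pg by (rule ext, rule pd_linear[OF L smooth_diffble[OF sf1]])
    have dg: "g differentiable (at y)" for y
      unfolding g_def by (rule differentiable_lin[OF L smooth_diffble[OF sf]])
    have dg1: "pd k g differentiable (at y)" for k y
      unfolding pg by (rule differentiable_lin[OF L smooth_diffble[OF sf1]])
    have cg: "isCont (pd l (pd k g)) y" for k l y
      unfolding pg2 by (rule differentiable_imp_continuous_within, rule differentiable_lin[OF L smooth_diffble[OF sf2]])
    have "pd j (pd i g) x = pd i (pd j g) x"
      by (rule schwarz_real[OF dg dg1 dg1 cg cg])
    then show ?thesis by (simp add: pg2)
  qed
  then show ?thesis by (simp add: vec_eq_iff)
qed



lemmas br_simps = bounded_bilinear.add_left[OF bb_br] bounded_bilinear.add_right[OF bb_br]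
  bounded_bilinear.diff_left[OF bb_br] bounded_bilinear.diff_right[OF bb_br]
  bounded_bilinear.minus_left[OF bb_br] bounded_bilinear.minus_right[OF bb_br]
  bounded_bilinear.zero_left[OF bb_br] bounded_bilinear.zero_right[OF bb_br]
  bounded_bilinear.sum_left[OF bb_br] bounded_bilinear.sum_right[OF bb_br]
  bounded_bilinear.scaleR_left[OF bb_br] bounded_bilinear.scaleR_right[OF bb_br]

lemma curv_fun: "curv A i j = (\<lambda>x. pd i (A j) x - pd j (A i) x + br (A i x) (A j x))"
  by (simp add: fun_eq_iff curv_def)

lemma cov_fun: "cov A p T = (\<lambda>x. pd p T x + br (A p x) (T x))"
  by (simp add: fun_eq_iff cov_def)

lemma smooth_curv: "(\<And>i. smooth_fun (A i)) \<Longrightarrow> smooth_fun (curv A i j)"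
  unfolding curv_fun by (intro smooth_add smooth_diff smooth_br smooth_pd)

lemma smooth_cov: "(\<And>i. smooth_fun (A i)) \<Longrightarrow> smooth_fun T \<Longrightarrow> smooth_fun (cov A p T)"
  unfolding cov_fun by (intro smooth_add smooth_br smooth_pd)

lemma curv_anti: "curv A i j x = - curv A j i x"
  by (simp add: curv_def br_anti[of "A i x"])

lemma cov_add: "f differentiable (at x) \<Longrightarrow> g differentiable (at x) \<Longrightarrow>
   cov A k (\<lambda>y. f y + g y) x = cov A k f x + cov A k g x"
  by (simp add: cov_def pd_add br_simps)

lemma cov_diff: "f differentiable (at x) \<Longrightarrow> g differentiable (at x) \<Longrightarrow>
   cov A k (\<lambda>y. f y - g y) x = cov A k f x - cov A k g x"
  by (simp add: cov_def pd_diff br_simps)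

lemma cov_minus: "f differentiable (at x) \<Longrightarrow> cov A k (\<lambda>y. - f y) x = - cov A k f x"
  by (simp add: cov_def pd_minus br_simps)

lemma cov_sum: "(\<And>p. p \<in> S \<Longrightarrow> f p differentiable (at x)) \<Longrightarrow>
   cov A k (\<lambda>y. \<Sum>p\<in>S. f p y) x = (\<Sum>p\<in>S. cov A k (f p) x)"
  by (simp add: cov_def pd_sum br_simps sum.distrib)

lemma cov_scal: "c differentiable (at x) \<Longrightarrow> f differentiable (at x) \<Longrightarrow>
   cov A k (\<lambda>y. c y *\<^sub>R f y) x = pd k c x *\<^sub>R f x + c x *\<^sub>R cov A k f x"
  by (simp add: cov_def pd_bilin[OF bounded_bilinear_scaleR] br_simps algebra_simps)

lemma cov_br: "f differentiable (at x) \<Longrightarrow> g differentiable (at x) \<Longrightarrow>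
   cov A k (\<lambda>y. br (f y) (g y)) x = br (cov A k f x) (g x) + br (f x) (cov A k g x)"
  using jacobi[of "A k x" "f x" "g x"] by (simp add: cov_def pd_bilin[OF bb_br] br_simps algebra_simps)



lemma cov_cov_expand:
  assumes sA: "\<And>i. smooth_fun (A i)" and sT: "smooth_fun T"
  shows "cov A k (cov A p T) x = pd k (pd p T) x + br (A k x) (pd p T x)
     + br (pd k (A p) x + br (A k x) (A p x)) (T x) + br (A p x) (pd k T x + br (A k x) (T x))"
proof -
  have "cov A k (cov A p T) x = cov A k (\<lambda>y. pd p T y + br (A p y) (T y)) x" by (simp add: cov_fun)
  also have "\<dots> = cov A k (pd p T) x + cov A k (\<lambda>y. br (A p y) (T y)) x"
    by (rule cov_add) (intro smooth_diffble smooth_br smooth_pd sA sT)+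
  also have "\<dots> = cov A k (pd p T) x + (br (cov A k (A p) x) (T x) + br (A p x) (cov A k T x))"
    by (subst cov_br) (auto intro: smooth_diffble sA sT)
  finally show ?thesis by (simp add: cov_def algebra_simps)
qed

lemma commutator:
  assumes sA: "\<And>i. smooth_fun (A i)" and sT: "smooth_fun T"
  shows "cov A k (cov A p T) x = cov A p (cov A k T) x + br (curv A k p x) (T x)"
  using cov_cov_expand[OF sA sT, where k=k and p=p and x=x] cov_cov_expand[OF sA sT, where k=p and p=k and x=x]
    schwarz[OF sT, where j=k and i=p and x=x] jacobi[of "A k x" "A p x" "T x"] br_anti[of "A p x" "A k x"]
  by (simp add: curv_def br_simps algebra_simps)

context
  fixes A :: "'n::finite \<Rightarrow> real^'n \<Rightarrow> real^'r^'r"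
  assumes sA: "\<And>i. smooth_fun (A i)"
begin

lemma cov_curv_expand:
  shows "cov A k (curv A p j) x = pd k (pd p (A j)) x - pd k (pd j (A p)) x
    + br (pd k (A p) x) (A j x) + br (A p x) (pd k (A j) x) + br (A k x) (curv A p j x)"
proof -
  have d: "\<And>i l y. pd i (A l) differentiable (at y)" "\<And>l y. A l differentiable (at y)"
    by (intro smooth_diffble smooth_pd sA)+
  have "pd k (curv A p j) x = pd k (\<lambda>y. pd p (A j) y - pd j (A p) y + br (A p y) (A j y)) x"
    by (simp add: curv_fun)
  also have "\<dots> = pd k (\<lambda>y. pd p (A j) y - pd j (A p) y) x + pd k (\<lambda>y. br (A p y) (A j y)) x"
    by (rule pd_add) (auto intro!: differentiable_bilin[OF bb_br] differentiable_diff d)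
  also have "\<dots> = pd k (pd p (A j)) x - pd k (pd j (A p)) x + (br (pd k (A p) x) (A j x) + br (A p x) (pd k (A j) x))"
    by (simp add: pd_diff pd_bilin[OF bb_br] d)
  finally show ?thesis by (simp add: cov_def algebra_simps)
qed

lemma bianchi:
  shows "cov A k (curv A p j) x + cov A p (curv A j k) x + cov A j (curv A k p) x = 0"
  unfolding cov_curv_expand curv_def
  by (simp add: schwarz[OF sA[of j], where j=k and i=p and x=x] schwarz[OF sA[of p], where j=k and i=j and x=x]
     schwarz[OF sA[of k], where j=p and i=j and x=x]
    jacobi[of "A k x" "A p x" "A j x"]
    br_anti[of "pd k (A p) x" "A j x"] br_anti[of "pd p (A j) x" "A k x"] br_anti[of "pd j (A k) x" "A p x"]
    br_anti[of "br (A k x) (A p x)" "A j x"] br_anti[of "A k x" "A j x"] br_simps algebra_simps)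

end



lemma smooth_coef: "smooth_fun (\<lambda>y::real^'n::finite. V $ p + b * y $ p)"
  by (intro smooth_add smooth_const smooth_lin[OF bounded_linear_mult_right] smooth_coord)

lemma pd_coef: "pd k (\<lambda>y::real^'n::finite. V $ p + b * y $ p) x = (if k = p then b else 0)"
proof -
  have "pd k (\<lambda>y::real^'n::finite. V $ p + b * y $ p) x = pd k (\<lambda>y. V $ p) x + pd k (\<lambda>y. b * y $ p) x"
    by (rule pd_add) (auto intro!: smooth_diffble smooth_lin[OF bounded_linear_mult_right] smooth_coord)
  also have "pd k (\<lambda>y::real^'n. b * y $ p) x = b * pd k (\<lambda>y. y $ p) x"
    by (rule pd_linear[OF bounded_linear_mult_right]) (auto intro!: smooth_diffble smooth_coord)
  finally show ?thesis by (simp add: pd_const pd_coord)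
qed

lemma cov_affine:
  fixes T :: "'n::finite \<Rightarrow> real^'n \<Rightarrow> real^'r^'r"
  assumes sT: "\<And>p. smooth_fun (T p)"
  shows "cov A k (\<lambda>y. \<Sum>p\<in>UNIV. (V $ p + b * y $ p) *\<^sub>R T p y) x
     = b *\<^sub>R T k x + (\<Sum>p\<in>UNIV. (V $ p + b * x $ p) *\<^sub>R cov A k (T p) x)"
proof -
  have "cov A k (\<lambda>y. \<Sum>p\<in>UNIV. (V $ p + b * y $ p) *\<^sub>R T p y) x
      = (\<Sum>p\<in>UNIV. cov A k (\<lambda>y. (V $ p + b * y $ p) *\<^sub>R T p y) x)"
    by (rule cov_sum) (intro smooth_diffble smooth_scaleR smooth_coef sT)
  also have "\<dots> = (\<Sum>p\<in>UNIV. (if k = p then b *\<^sub>R T p x else 0) + (V $ p + b * x $ p) *\<^sub>R cov A k (T p) x)"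
    by (rule sum.cong[OF refl], subst cov_scal) (auto intro!: smooth_diffble smooth_coef sT simp: pd_coef)
  also have "\<dots> = b *\<^sub>R T k x + (\<Sum>p\<in>UNIV. (V $ p + b * x $ p) *\<^sub>R cov A k (T p) x)"
    by (simp add: sum.distrib)
  finally show ?thesis .
qed



context
  fixes A :: "'n::finite \<Rightarrow> real^'n \<Rightarrow> real^'r^'r"
  assumes sA: "\<And>i. smooth_fun (A i)"
begin

lemma two_scale: "(2 * b) *\<^sub>R (M::'a::real_vector) = b *\<^sub>R M + b *\<^sub>R M"
  by (metis mult_2 scaleR_left_distrib)

lemma sC: "smooth_fun (curv A i j)" by (rule smooth_curv[OF sA])

lemma cov_curv_anti: "cov A p (curv A j k) y = - cov A p (curv A k j) y"
proof -
  have "curv A j k = (\<lambda>y. - curv A k j y)" using curv_anti by blast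
  then show ?thesis using cov_minus[OF smooth_diffble[OF sC]] by simp
qed

lemma cov_swap: "cov A k (curv A p j) y - cov A j (curv A p k) y = cov A p (curv A k j) y"
  using bianchi[where A=A, OF sA, of k p j y] cov_curv_anti[of p j k y] cov_curv_anti[of j k p y]
  by (simp add: algebra_simps)

lemma dtheta:
  "cov A k (\<lambda>y. \<Sum>p\<in>UNIV. (V $ p + b * y $ p) *\<^sub>R curv A p j y) y
   - cov A j (\<lambda>y. \<Sum>p\<in>UNIV. (V $ p + b * y $ p) *\<^sub>R curv A p k y) y
   = (2 * b) *\<^sub>R curv A k j y + (\<Sum>p\<in>UNIV. (V $ p + b * y $ p) *\<^sub>R cov A p (curv A k j) y)"
proof -
  have "cov A k (\<lambda>y. \<Sum>p\<in>UNIV. (V $ p + b * y $ p) *\<^sub>R curv A p j y) y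
   - cov A j (\<lambda>y. \<Sum>p\<in>UNIV. (V $ p + b * y $ p) *\<^sub>R curv A p k y) y
   = b *\<^sub>R curv A k j y - b *\<^sub>R curv A j k y
     + (\<Sum>p\<in>UNIV. (V $ p + b * y $ p) *\<^sub>R (cov A k (curv A p j) y - cov A j (curv A p k) y))"
    by (simp add: cov_affine[OF sC] scaleR_diff_right sum_subtractf)
  also have "\<dots> = (2 * b) *\<^sub>R curv A k j y + (\<Sum>p\<in>UNIV. (V $ p + b * y $ p) *\<^sub>R cov A p (curv A k j) y)"
    by (simp add: cov_swap curv_anti[of A j k] two_scale)
  finally show ?thesis .
qed

lemma sG: "smooth_fun (cov A p (curv A k j))" by (rule smooth_cov[OF sA sC])

lemma dstard_inner:
  "cov A k (\<lambda>y. cov A k (\<lambda>y. \<Sum>p\<in>UNIV. (V $ p + b * y $ p) *\<^sub>R curv A p j y) y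
   - cov A j (\<lambda>y. \<Sum>p\<in>UNIV. (V $ p + b * y $ p) *\<^sub>R curv A p k y) y) x
   = (3 * b) *\<^sub>R cov A k (curv A k j) x + (\<Sum>p\<in>UNIV. (V $ p + b * x $ p) *\<^sub>R cov A k (cov A p (curv A k j)) x)"
proof -
  have e: "(\<lambda>y. cov A k (\<lambda>y. \<Sum>p\<in>UNIV. (V $ p + b * y $ p) *\<^sub>R curv A p j y) y
   - cov A j (\<lambda>y. \<Sum>p\<in>UNIV. (V $ p + b * y $ p) *\<^sub>R curv A p k y) y)
   = (\<lambda>y. (2 * b) *\<^sub>R curv A k j y + (\<Sum>p\<in>UNIV. (V $ p + b * y $ p) *\<^sub>R cov A p (curv A k j) y))"
    by (rule ext, rule dtheta)
  have "cov A k (\<lambda>y. (2 * b) *\<^sub>R curv A k j y + (\<Sum>p\<in>UNIV. (V $ p + b * y $ p) *\<^sub>R cov A p (curv A k j) y)) x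
     = cov A k (\<lambda>y. (2 * b) *\<^sub>R curv A k j y) x + cov A k (\<lambda>y. \<Sum>p\<in>UNIV. (V $ p + b * y $ p) *\<^sub>R cov A p (curv A k j) y) x"
    by (rule cov_add) (intro smooth_diffble smooth_scaleR smooth_const sC smooth_sum finite smooth_coef sG)+
  also have "cov A k (\<lambda>y. (2 * b) *\<^sub>R curv A k j y) x = (2 * b) *\<^sub>R cov A k (curv A k j) x"
    by (subst cov_scal) (auto intro: smooth_diffble sC simp: pd_const)
  also have "cov A k (\<lambda>y. \<Sum>p\<in>UNIV. (V $ p + b * y $ p) *\<^sub>R cov A p (curv A k j) y) x
     = b *\<^sub>R cov A k (curv A k j) x + (\<Sum>p\<in>UNIV. (V $ p + b * x $ p) *\<^sub>R cov A k (cov A p (curv A k j)) x)"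
    by (rule cov_affine[OF sG])
  finally have "cov A k (\<lambda>y. (2 * b) *\<^sub>R curv A k j y + (\<Sum>p\<in>UNIV. (V $ p + b * y $ p) *\<^sub>R cov A p (curv A k j) y)) x
    = ((2 * b) *\<^sub>R cov A k (curv A k j) x + b *\<^sub>R cov A k (curv A k j) x) + (\<Sum>p\<in>UNIV. (V $ p + b * x $ p) *\<^sub>R cov A k (cov A p (curv A k j)) x)"
    by (simp only: add.assoc)
  also have "(2 * b) *\<^sub>R cov A k (curv A k j) x + b *\<^sub>R cov A k (curv A k j) x = (3 * b) *\<^sub>R cov A k (curv A k j) x"
    by (simp only: scaleR_left_distrib[symmetric]) simp
  finally show ?thesis unfolding e .
qed

lemma dstard_eq:
  "dstard A (\<lambda>j y. \<Sum>p\<in>UNIV. (V $ p + b * y $ p) *\<^sub>R curv A p j y) j x =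
   - ((3 * b) *\<^sub>R Jform A j x + (\<Sum>p\<in>UNIV. (V $ p + b * x $ p) *\<^sub>R (\<Sum>k\<in>UNIV. cov A k (cov A p (curv A k j)) x)))"
  unfolding dstard_def dstard_inner Jform_def sum.distrib scaleR_sum_right
  by (subst sum.swap) (rule refl)

lemma comm_sum:
  "(\<Sum>k\<in>UNIV. cov A k (cov A p (curv A k j)) x) = cov A p (Jform A j) x + (\<Sum>k\<in>UNIV. br (curv A k p x) (curv A k j x))"
proof -
  have "(\<Sum>k\<in>UNIV. cov A k (cov A p (curv A k j)) x) = (\<Sum>k\<in>UNIV. cov A p (cov A k (curv A k j)) x + br (curv A k p x) (curv A k j x))"
    by (rule sum.cong[OF refl], rule commutator[where A=A, OF sA sC])
  also have "\<dots> = cov A p (\<lambda>y. \<Sum>k\<in>UNIV. cov A k (curv A k j) y) x + (\<Sum>k\<in>UNIV. br (curv A k p x) (curv A k j x))"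
    by (subst cov_sum) (auto intro: smooth_diffble sG simp: sum.distrib)
  also have "(\<lambda>y. \<Sum>k\<in>UNIV. cov A k (curv A k j) y) = Jform A j"
    by (simp add: fun_eq_iff Jform_def)
  finally show ?thesis .
qed

context
  assumes sol: "\<forall>j x. Jform A j x - (1/2) *\<^sub>R (\<Sum>p\<in>UNIV. (x $ p) *\<^sub>R curv A p j x) = 0"
begin

lemma J_val: "Jform A j x = (1/2) *\<^sub>R (\<Sum>p\<in>UNIV. (x $ p) *\<^sub>R curv A p j x)"
  using sol by (simp add: right_minus_eq)

lemma J_fun: "Jform A j = (\<lambda>y. \<Sum>p\<in>UNIV. ((0::real^'n) $ p + (1/2) * y $ p) *\<^sub>R curv A p j y)"
  by (simp add: fun_eq_iff J_val scaleR_sum_right)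

lemma cov_J: "cov A p (Jform A j) x = (1/2) *\<^sub>R curv A p j x + (\<Sum>q\<in>UNIV. ((1/2) * x $ q) *\<^sub>R cov A p (curv A q j) x)"
  unfolding J_fun by (subst cov_affine[OF sC]) simp

lemma br_term: "br (curv A k j x) (curv A p k x) = br (curv A k p x) (curv A k j x)"
proof -
  have "br (curv A k j x) (curv A p k x) = br (curv A k j x) (- curv A k p x)" by (simp only: curv_anti[of A p k x])
  also have "\<dots> = br (curv A k p x) (curv A k j x)" by (simp add: br_simps br_anti[of "curv A k j x"])
  finally show ?thesis .
qed

lemma main_gen:
  "Lop A (\<lambda>j y. \<Sum>p\<in>UNIV. (V $ p + b * y $ p) *\<^sub>R curv A p j y) j x
   = b *\<^sub>R Jform A j x + (1/2) *\<^sub>R (\<Sum>p\<in>UNIV. (V $ p + b * x $ p) *\<^sub>R curv A p j x)"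
proof -
  define c where "c p = V $ p + b * x $ p" for p
  define G where "G p k = cov A p (curv A k j) x" for p k
  define S1 where "S1 = (\<Sum>k\<in>UNIV. x $ k *\<^sub>R curv A k j x)"
  define S2 where "S2 = (\<Sum>k\<in>UNIV. x $ k *\<^sub>R (\<Sum>p\<in>UNIV. c p *\<^sub>R G p k))"
  define S3 where "S3 = (\<Sum>p\<in>UNIV. c p *\<^sub>R (\<Sum>k\<in>UNIV. br (curv A k p x) (curv A k j x)))"
  define Th where "Th = (\<Sum>p\<in>UNIV. c p *\<^sub>R curv A p j x)"
  let ?\<theta> = "\<lambda>j y. \<Sum>p\<in>UNIV. (V $ p + b * y $ p) *\<^sub>R curv A p j y"
  have J: "S1 = 2 *\<^sub>R Jform A j x" unfolding S1_def J_val by simp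
  have mid: "(\<Sum>p\<in>UNIV. c p *\<^sub>R (\<Sum>q\<in>UNIV. ((1/2) * x $ q) *\<^sub>R G p q)) = (1/2) *\<^sub>R S2"
  proof -
    have "(\<Sum>p\<in>UNIV. c p *\<^sub>R (\<Sum>q\<in>UNIV. ((1/2) * x $ q) *\<^sub>R G p q))
        = (\<Sum>p\<in>UNIV. \<Sum>q\<in>UNIV. ((1/2) * (x $ q * c p)) *\<^sub>R G p q)"
      by (simp add: scaleR_sum_right mult_ac)
    also have "\<dots> = (\<Sum>q\<in>UNIV. \<Sum>p\<in>UNIV. ((1/2) * (x $ q * c p)) *\<^sub>R G p q)"
      by (rule sum.swap)
    also have "\<dots> = (1/2) *\<^sub>R S2"
      by (simp add: S2_def scaleR_sum_right mult_ac)
    finally show ?thesis .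
  qed
  have D: "dstard A ?\<theta> j x = - ((3 * b) *\<^sub>R Jform A j x + ((1/2) *\<^sub>R Th + (1/2) *\<^sub>R S2 + S3))"
  proof -
    have "(\<Sum>p\<in>UNIV. c p *\<^sub>R (\<Sum>k\<in>UNIV. cov A k (cov A p (curv A k j)) x))
      = (\<Sum>p\<in>UNIV. c p *\<^sub>R ((1/2) *\<^sub>R curv A p j x) + c p *\<^sub>R (\<Sum>q\<in>UNIV. ((1/2) * x $ q) *\<^sub>R G p q)
          + c p *\<^sub>R (\<Sum>k\<in>UNIV. br (curv A k p x) (curv A k j x)))"
      by (simp add: comm_sum cov_J G_def scaleR_add_right)
    also have "\<dots> = (1/2) *\<^sub>R Th + (1/2) *\<^sub>R S2 + S3"
      unfolding sum.distrib mid by (simp add: Th_def S3_def scaleR_sum_right)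
    finally show ?thesis unfolding dstard_eq c_def by simp
  qed
  have R: "Rop A ?\<theta> j x = S3"
  proof -
    have "Rop A ?\<theta> j x = (\<Sum>k\<in>UNIV. \<Sum>p\<in>UNIV. c p *\<^sub>R br (curv A k p x) (curv A k j x))"
      unfolding Rop_def c_def by (simp add: br_simps br_term)
    also have "\<dots> = S3" unfolding S3_def scaleR_sum_right by (rule sum.swap)
    finally show ?thesis .
  qed
  have I: "ixd A ?\<theta> j x = b *\<^sub>R S1 + (1/2) *\<^sub>R S2"
  proof -
    have "ixd A ?\<theta> j x = (1/2) *\<^sub>R (\<Sum>k\<in>UNIV. x $ k *\<^sub>R ((2 * b) *\<^sub>R curv A k j x + (\<Sum>p\<in>UNIV. c p *\<^sub>R G p k)))"
      unfolding ixd_def dtheta c_def G_def ..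
    also have "\<dots> = b *\<^sub>R S1 + (1/2) *\<^sub>R S2"
      by (simp add: S1_def S2_def scaleR_add_right sum.distrib scaleR_sum_right mult_ac)
    finally show ?thesis .
  qed
  show ?thesis
    unfolding Lop_def D R I J c_def[symmetric] Th_def[symmetric]
    by (simp add: algebra_simps scaleR_left_distrib[symmetric])
qed

end

end


theorem mainTheorem11:
  fixes G :: "(real^'r^'r) set" and A :: "'n::finite \<Rightarrow> real^'n \<Rightarrow> real^'r^'r"
  assumes "compact_subgroup_SO G"
    and "S01 (lie_algebra G) A"
  shows "(\<forall>j x. Lop A (Jform A) j x = Jform A j x) \<and>
         (\<forall>V j x. Lop A (iF A V) j x = (1/2) *\<^sub>R iF A V j x)"
proof -
  have sA: "\<And>i. smooth_fun (A i)" using assms(2) by (simp add: S01_def)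
  have sol: "\<forall>j x. Jform A j x - (1/2) *\<^sub>R (\<Sum>p\<in>UNIV. (x $ p) *\<^sub>R curv A p j x) = 0"
    using assms(2) by (simp add: S01_def)
  note MG = main_gen[where A=A, OF sA sol]
  have JF: "Jform A = (\<lambda>j y. \<Sum>p\<in>UNIV. ((0::real^'n) $ p + (1/2) * y $ p) *\<^sub>R curv A p j y)"
    using J_fun[where A=A, OF sA sol] by (simp add: fun_eq_iff)
  have IF: "iF A V = (\<lambda>j y. \<Sum>p\<in>UNIV. (V $ p + 0 * y $ p) *\<^sub>R curv A p j y)" for V
    by (simp add: fun_eq_iff iF_def)
  show ?thesis
  proof (intro conjI allI)
    fix j x
    have "Lop A (Jform A) j x = (1/2) *\<^sub>R Jform A j x + (1/2) *\<^sub>R (\<Sum>p\<in>UNIV. ((0::real^'n) $ p + (1/2) * x $ p) *\<^sub>R curv A p j x)"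
      unfolding JF[symmetric] using MG[where V=0 and b="1/2" and j=j and x=x] by (simp only: JF[symmetric])
    also have "(\<Sum>p\<in>UNIV. ((0::real^'n) $ p + (1/2) * x $ p) *\<^sub>R curv A p j x) = Jform A j x"
      using J_val[where A=A, OF sA sol, of j x] by (simp add: scaleR_sum_right)
    finally show "Lop A (Jform A) j x = Jform A j x" by (simp add: scaleR_left_distrib[symmetric])
  next
    fix V j x
    show "Lop A (iF A V) j x = (1/2) *\<^sub>R iF A V j x"
      unfolding IF using MG[where V=V and b=0 and j=j and x=x] by simp
  qed
qed

end
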